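(* Let $n>1$, $1\le k\le\lceil\log_2 n\rceil$ and $p\in[0,1]$. Any (possibly randomized) algorithm for Locate that runs in $k$ rounds and succeeds with probability at least $p$ on every input of size $n$ issues, on its worst-case input, at least $\frac{k}{4e}\,p\,n^{1/k}-1-pk$ queries in expectation.
   Context: Locate problem in the rank query model: there is a vector $\vec{x}=(x_1,\ldots,x_n)$ whose ranks form an unknown permutation of $\{1,\ldots,n\}$; an index $i$ is given and the goal is to output $\mathrm{rank}(x_i)$. Queries have the form "How is $\mathrm{rank}(x_j)$ compared to $m$?", with answer "$<$", "$=$" or "$>$". An algorithm runs in $k$ rounds if in each of $k$ rounds it submits a set of queries chosen depending only on answers of earlier rounds (and its randomness), then receives all answers. A randomized algorithm is a distribution over deterministic algorithms; the expectation is over its randomness. *)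

theory Defs
  imports "HOL-Probability.Probability"
begin

datatype cmp = Lt | Eq | Gt

definition cmp_nat :: "nat \<Rightarrow> nat \<Rightarrow> cmp" where
  "cmp_nat a b = (if a < b then Lt else if a = b then Eq else Gt)"

text \<open>A hidden input is the rank function sigma: index j (j < n) has rank sigma j in {1..n}.
  Outside {..<n} sigma is normalised to 0.\<close>
definition inputs :: "nat \<Rightarrow> (nat \<Rightarrow> nat) set" where
  "inputs n = {\<sigma>. bij_betw \<sigma> {..<n} {1..n} \<and> (\<forall>j\<ge>n. \<sigma> j = 0)}"

definition answer :: "(nat \<Rightarrow> nat) \<Rightarrow> nat \<times> nat \<Rightarrow> cmp" where
  "answer \<sigma> q = cmp_nat (\<sigma> (fst q)) (snd q)"

text \<open>A deterministic round-based algorithm: in round r, given the target index i and the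
  table of all answers received in earlier rounds, it submits a set of queries;
  at the end it outputs a value from i and the final answer table.\<close>
datatype alg = Alg
  (queries: "nat \<Rightarrow> nat \<Rightarrow> (nat \<times> nat \<rightharpoonup> cmp) \<Rightarrow> (nat \<times> nat) set")
  (out: "nat \<Rightarrow> (nat \<times> nat \<rightharpoonup> cmp) \<Rightarrow> nat")

definition valid_alg :: "alg \<Rightarrow> bool" where
  "valid_alg A = (\<forall>r i h. finite (queries A r i h))"

fun hist :: "alg \<Rightarrow> (nat \<Rightarrow> nat) \<Rightarrow> nat \<Rightarrow> nat \<Rightarrow> (nat \<times> nat \<rightharpoonup> cmp)" where
  "hist A \<sigma> i 0 = Map.empty"
| "hist A \<sigma> i (Suc r) =
     (let h = hist A \<sigma> i r
      in h ++ (\<lambda>q. if q \<in> queries A r i h then Some (answer \<sigma> q) else None))"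

definition cost :: "alg \<Rightarrow> nat \<Rightarrow> (nat \<Rightarrow> nat) \<Rightarrow> nat \<Rightarrow> nat" where
  "cost A k \<sigma> i = (\<Sum>r<k. card (queries A r i (hist A \<sigma> i r)))"

definition succeeds :: "alg \<Rightarrow> nat \<Rightarrow> (nat \<Rightarrow> nat) \<Rightarrow> nat \<Rightarrow> bool" where
  "succeeds A k \<sigma> i = (out A i (hist A \<sigma> i k) = \<sigma> i)"

end

theory Submission
  imports Defs
begin


definition hs :: "nat \<Rightarrow> nat \<Rightarrow> nat \<Rightarrow> nat" where
  "hs n v j = (if j = 0 then v else if j < n then (if j < v then j else Suc j) else 0)"

lemma hs_inputs:
  assumes "1 \<le> v" "v \<le> n"
  shows "hs n v \<in> inputs n"
proof -
  have img: "hs n v ` {..<n} = {1..n}"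
  proof
    show "hs n v ` {..<n} \<subseteq> {1..n}" using assms by (auto simp: hs_def)
  next
    show "{1..n} \<subseteq> hs n v ` {..<n}"
    proof
      fix y assume y: "y \<in> {1..n}"
      show "y \<in> hs n v ` {..<n}"
      proof (cases "y = v")
        case True then show ?thesis using assms by (auto simp: hs_def intro!: image_eqI[where x=0])
      next
        case False
        show ?thesis
        proof (cases "y < v")
          case True then show ?thesis using y assms by (auto simp: hs_def intro!: image_eqI[where x=y])
        next
          case False2: False
          then show ?thesis using y assms False
            by (auto simp: hs_def intro!: image_eqI[where x="y - 1"])
        qed
      qed
    qed
  qed
  have "inj_on (hs n v) {..<n}"
    by (rule eq_card_imp_inj_on) (auto simp: img)
  then show ?thesis using img assms by (auto simp: inputs_def bij_betw_def hs_def)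
qed

definition bp :: "nat \<times> nat \<Rightarrow> nat set" where
  "bp q = (if fst q = 0 then {snd q - 1, snd q} else {fst q})"

lemma bp_card: "card (bp q) \<le> 2"
  by (auto simp: bp_def card_insert_le_m1)

lemma bp_finite: "finite (bp q)"
  by (auto simp: bp_def)

lemma bp_change:
  assumes "answer (hs n v) q \<noteq> answer (hs n (Suc v)) q"
  shows "v \<in> bp q"
  using assms by (cases q) (auto simp: bp_def answer_def cmp_nat_def hs_def split: if_splits)

definition ans :: "(nat \<times> nat) set \<Rightarrow> nat \<Rightarrow> nat \<Rightarrow> (nat \<times> nat \<rightharpoonup> cmp)" where
  "ans Q n v = (\<lambda>q. if q \<in> Q then Some (answer (hs n v) q) else None)"

lemma ans_change:
  assumes "ans Q n v \<noteq> ans Q n (Suc v)"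
  shows "v \<in> (\<Union>q\<in>Q. bp q)"
proof -
  from assms obtain q where "ans Q n v q \<noteq> ans Q n (Suc v) q" by (meson ext)
  then have "q \<in> Q" "answer (hs n v) q \<noteq> answer (hs n (Suc v)) q"
    by (auto simp: ans_def split: if_splits)
  then show ?thesis using bp_change by blast
qed

lemma ans_const:
  assumes fin: "finite B" and B: "\<And>u. ans Q n u \<noteq> ans Q n (Suc u) \<Longrightarrow> u \<in> B"
    and vw: "v \<le> w" and eq: "card (B \<inter> {..<v}) = card (B \<inter> {..<w})"
  shows "ans Q n v = ans Q n w"
proof -
  have sub: "B \<inter> {..<v} \<subseteq> B \<inter> {..<w}" using vw by auto
  have seq: "B \<inter> {..<v} = B \<inter> {..<w}"
    by (rule card_subset_eq) (use fin sub eq in auto)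
  have nb: "u \<notin> B" if "v \<le> u" "u < w" for u
  proof
    assume "u \<in> B"
    then have "u \<in> B \<inter> {..<w}" using that by auto
    then have "u \<in> B \<inter> {..<v}" using seq by simp
    then show False using that by auto
  qed
  show ?thesis
    using vw
  proof (induction w rule: dec_induct)
    case base then show ?case by simp
  next
    case (step u)
    then have "ans Q n u = ans Q n (Suc u)" using B nb by blast
    then show ?case using step by simp
  qed
qed

lemma card_ans_image:
  assumes "finite Q"
  shows "card (ans Q n ` V) \<le> 2 * card Q + 1"
proof -
  define B where "B = (\<Union>q\<in>Q. bp q)"
  have finB: "finite B" using assms bp_finite by (auto simp: B_def)
  have cB: "card B \<le> 2 * card Q"
  proof -
    have "card B \<le> (\<Sum>q\<in>Q. card (bp q))" unfolding B_def by (rule card_UN_le[OF assms])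
    also have "\<dots> \<le> (\<Sum>q\<in>Q. 2)" by (rule sum_mono) (rule bp_card)
    finally show ?thesis by simp
  qed
  define g where "g v = card (B \<inter> {..<v})" for v
  have Bch: "\<And>u. ans Q n u \<noteq> ans Q n (Suc u) \<Longrightarrow> u \<in> B" using ans_change unfolding B_def by blast
  have geq: "ans Q n v = ans Q n w" if "g v = g w" for v w
  proof (cases "v \<le> w")
    case True then show ?thesis using ans_const[OF finB Bch True] that by (simp add: g_def)
  next
    case False then have "w \<le> v" by simp
    then show ?thesis using ans_const[OF finB Bch] that by (metis g_def)
  qed
  define \<phi> where "\<phi> t = ans Q n (SOME v. g v = t)" for t
  have "ans Q n v = \<phi> (g v)" for v
  proof -
    have "g (SOME w. g w = g v) = g v" by (rule someI) simp
    then show ?thesis unfolding \<phi>_def using geq by metis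
  qed
  then have "ans Q n ` V \<subseteq> \<phi> ` {..card B}"
    using card_mono[OF finB, of "B \<inter> {..<_}"] by (auto simp: g_def)
  then have "card (ans Q n ` V) \<le> card (\<phi> ` {..card B})"
    by (rule card_mono[rotated]) simp
  also have "\<dots> \<le> card {..card B}" by (rule card_image_le) simp
  finally show ?thesis using cB by simp
qed



definition KK :: "nat \<Rightarrow> real \<Rightarrow> real" where
  "KK m x = real m * x powr (1 / real m) / (4 * exp 1) - real m"

lemma young_aux:
  fixes x y :: real and m :: nat
  assumes m: "m \<ge> 2" and x: "x \<ge> 0" and y: "y \<ge> 0"
  shows "y * (real m * x powr (1 / real m) - (real m - 1) * y powr (1 / (real m - 1))) \<le> x"
proof (cases "x = 0 \<or> y = 0")
  case True
  then show ?thesis using m x y by (auto intro!: mult_nonneg_nonneg)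
next
  case False
  then have xp: "x > 0" and yp: "y > 0" using x y by auto
  have m1: "real m - 1 > 0" using m by simp
  define b where "b = y powr (real m / (real m - 1))"
  have bp: "b > 0" using yp by (simp add: b_def)
  have "x powr (1 / real m) * b powr ((real m - 1) / real m)
        \<le> (1 / real m) * x + ((real m - 1) / real m) * b"
    by (rule Youngs_inequality_0) (use m xp bp in \<open>auto simp: field_simps\<close>)
  moreover have "b powr ((real m - 1) / real m) = y"
    using m1 m yp by (simp add: b_def powr_powr)
  moreover have "b = y * y powr (1 / (real m - 1))"
  proof -
    have "real m / (real m - 1) = 1 + 1 / (real m - 1)" using m1 by (simp add: field_simps)
    then show ?thesis using yp by (simp add: b_def powr_add)
  qed
  ultimately have "x powr (1 / real m) * y \<le> (1 / real m) * x + ((real m - 1) / real m) * (y * y powr (1 / (real m - 1)))"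
    by simp
  then have "real m * (x powr (1 / real m) * y) \<le> real m * ((1 / real m) * x + ((real m - 1) / real m) * (y * y powr (1 / (real m - 1))))"
    using m by (intro mult_left_mono) auto
  moreover have "real m * ((1 / real m) * x + ((real m - 1) / real m) * (y * y powr (1 / (real m - 1))))
      = x + (real m - 1) * (y * y powr (1 / (real m - 1)))" using m by (simp add: field_simps)
  moreover have "y * (real m * x powr (1 / real m) - (real m - 1) * y powr (1 / (real m - 1)))
      = real m * (x powr (1 / real m) * y) - (real m - 1) * (y * y powr (1 / (real m - 1)))"
    by (simp add: algebra_simps)
  ultimately show ?thesis by linarith
qed

lemma part_ineq:
  fixes x y S T :: real and m :: nat
  assumes m: "m \<ge> 2" and x: "x \<ge> 0" and y: "y \<ge> 0" and S0: "0 \<le> S" and Sy: "S \<le> y"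
    and IH: "S * KK (m - 1) y \<le> T + y"
  shows "S * KK m x \<le> T + max y (x / (4 * exp 1))"
proof (cases "KK m x \<le> KK (m - 1) y")
  case True
  have "S * KK m x \<le> S * KK (m - 1) y" using True S0 by (rule mult_left_mono)
  then show ?thesis using IH by linarith
next
  case False
  have e: "4 * exp 1 > (0::real)" by simp
  have rm: "real (m - 1) = real m - 1" using m by simp
  have Y: "y * (real m * x powr (1 / real m) - (real m - 1) * y powr (1 / (real m - 1))) \<le> x"
    by (rule young_aux[OF m x y])
  have "y * (KK m x - KK (m - 1) y) = y * (real m * x powr (1 / real m) - (real m - 1) * y powr (1 / (real m - 1))) / (4 * exp 1) - y"
    unfolding KK_def rm by (simp add: field_simps)
  also have "\<dots> \<le> x / (4 * exp 1) - y"
    using Y e by (simp add: divide_right_mono)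
  finally have D: "y * (KK m x - KK (m - 1) y) \<le> x / (4 * exp 1) - y" .
  have "S * KK m x = S * KK (m - 1) y + S * (KK m x - KK (m - 1) y)" by (simp add: algebra_simps)
  also have "S * (KK m x - KK (m - 1) y) \<le> y * (KK m x - KK (m - 1) y)"
    using False Sy by (intro mult_right_mono) auto
  finally show ?thesis using IH D by linarith
qed

lemma base_ineq:
  fixes x S :: real and c :: nat
  assumes x: "x \<ge> 0" and S0: "0 \<le> S" and Sc: "S \<le> 2 * real c + 1"
  shows "S * KK 1 x \<le> x * real c + x"
proof -
  have e: "exp 1 \<ge> (1::real)" by simp
  have "S * KK 1 x = S * x / (4 * exp 1) - S" using x by (simp add: KK_def algebra_simps)
  also have "\<dots> \<le> S * x / (4 * exp 1)" using S0 by simp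
  also have "\<dots> \<le> (2 * real c + 1) * x / (4 * exp 1)"
    using Sc x by (intro divide_right_mono mult_right_mono) auto
  also have "\<dots> \<le> (2 * real c + 1) * x / 4"
    using x e by (intro divide_left_mono) auto
  also have "\<dots> \<le> x * real c + x" using x by (simp add: field_simps)
  finally show ?thesis .
qed



definition Hh :: "alg \<Rightarrow> nat \<Rightarrow> nat \<Rightarrow> nat \<Rightarrow> (nat \<times> nat \<rightharpoonup> cmp)" where
  "Hh A n r v = hist A (hs n v) 0 r"

definition Tm :: "alg \<Rightarrow> nat \<Rightarrow> nat \<Rightarrow> nat \<Rightarrow> nat set \<Rightarrow> nat" where
  "Tm A n k r V = (\<Sum>v\<in>V. \<Sum>t\<in>{r..<k}. card (queries A t 0 (Hh A n t v)))"

definition Sc :: "alg \<Rightarrow> nat \<Rightarrow> nat \<Rightarrow> nat set \<Rightarrow> nat" where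
  "Sc A n k V = (\<Sum>v\<in>V. if succeeds A k (hs n v) 0 then 1 else 0)"

lemma Hh_Suc:
  assumes "Hh A n r v = h"
  shows "Hh A n (Suc r) v = h ++ ans (queries A r 0 h) n v"
  using assms by (simp add: Hh_def ans_def Let_def)

lemma card_parts:
  assumes "valid_alg A" "\<forall>v\<in>V. Hh A n r v = h" "finite V"
  shows "card (Hh A n (Suc r) ` V) \<le> 2 * card (queries A r 0 h) + 1"
proof -
  have "Hh A n (Suc r) ` V = (\<lambda>a. h ++ a) ` (ans (queries A r 0 h) n ` V)"
    using assms(2) Hh_Suc by (auto simp: image_image intro!: image_cong)
  then have "card (Hh A n (Suc r) ` V) \<le> card (ans (queries A r 0 h) n ` V)"
    using assms(3) by (simp add: card_image_le)
  also have "\<dots> \<le> 2 * card (queries A r 0 h) + 1"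
    using assms(1) by (intro card_ans_image) (simp add: valid_alg_def)
  finally show ?thesis .
qed

lemma Tm_split:
  assumes "r < k" "\<forall>v\<in>V. Hh A n r v = h"
  shows "Tm A n k r V = card V * card (queries A r 0 h) + Tm A n k (Suc r) V"
proof -
  have "Tm A n k r V = (\<Sum>v\<in>V. card (queries A r 0 h) + (\<Sum>t\<in>{Suc r..<k}. card (queries A t 0 (Hh A n t v))))"
    unfolding Tm_def using assms by (intro sum.cong) (auto simp: sum.atLeast_Suc_lessThan)
  then show ?thesis by (simp add: sum.distrib Tm_def)
qed

lemma combine:
  fixes Hs :: "'a set" and y :: "'a \<Rightarrow> real" and x :: real and c :: nat
  assumes fin: "finite Hs" and sy: "(\<Sum>H\<in>Hs. y H) = x" and y0: "\<forall>H\<in>Hs. y H \<ge> 0"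
    and cH: "card Hs \<le> 2 * c + 1"
  shows "(\<Sum>H\<in>Hs. max (y H) (x / (4 * exp 1))) \<le> x * real c + x"
proof (cases "c = 0")
  case True
  then have "card Hs \<le> 1" using cH by simp
  then have "Hs = {} \<or> (\<exists>H0. Hs = {H0})" using fin by (metis card_0_eq card_1_singletonE le_neq_implies_less less_one)
  then show ?thesis
  proof
    assume "Hs = {}" then show ?thesis using sy True by simp
  next
    assume "\<exists>H0. Hs = {H0}"
    then obtain H0 where H0: "Hs = {H0}" by blast
    then have "y H0 = x" "x \<ge> 0" using sy y0 by auto
    moreover have "x / (4 * exp 1) \<le> x"
    proof -
      have "x / (4 * exp 1) \<le> x / 1" using \<open>x \<ge> 0\<close> exp_ge_add_one_self[of 1]
        by (intro divide_left_mono) auto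
      then show ?thesis by simp
    qed
    ultimately show ?thesis using H0 True by simp
  qed
next
  case False
  have x0: "x \<ge> 0" using sy y0 by (metis sum_nonneg)
  have "(\<Sum>H\<in>Hs. max (y H) (x / (4 * exp 1))) \<le> (\<Sum>H\<in>Hs. y H + x / (4 * exp 1))"
    using y0 x0 by (intro sum_mono) auto
  also have "\<dots> = x + real (card Hs) * (x / (4 * exp 1))" using sy by (simp add: sum.distrib)
  also have "\<dots> \<le> x + (2 * real c + 1) * (x / (4 * exp 1))"
    using cH x0 by (intro add_left_mono mult_right_mono) auto
  also have "\<dots> \<le> x + (2 * real c + 1) * (x / 4)"
    using x0 by (intro add_left_mono mult_left_mono divide_left_mono) auto
  also have "\<dots> \<le> x * real c + x"
  proof -
    have "1 \<le> real c * 2" using False by simp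
    then have "x * 1 \<le> x * (real c * 2)" using x0 by (rule mult_left_mono)
    then show ?thesis using False x0 by (simp add: field_simps)
  qed
  finally show ?thesis .
qed

lemma Sc_card: "finite V \<Longrightarrow> Sc A n k V = card {v\<in>V. succeeds A k (hs n v) 0}"
  unfolding Sc_def by (simp add: sum.inter_filter[symmetric])

lemma Sc_le: "finite V \<Longrightarrow> Sc A n k V \<le> card V"
  by (simp add: Sc_card card_mono)

lemma main_claim:
  assumes valid: "valid_alg A"
  shows "r + Suc m = k \<Longrightarrow> finite V \<Longrightarrow> \<forall>v\<in>V. Hh A n r v = h \<Longrightarrow>
    real (Sc A n k V) * KK (Suc m) (real (card V)) \<le> real (Tm A n k r V) + real (card V)"
proof (induction m arbitrary: r V h)
  case 0
  define c where "c = card (queries A r 0 h)"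
  have rk: "r < k" "Suc r = k" using 0 by auto
  have "Tm A n k r V = card V * c + Tm A n k (Suc r) V"
    using Tm_split[OF rk(1) 0(3)] by (simp add: c_def)
  also have "Tm A n k (Suc r) V = 0" using rk by (simp add: Tm_def)
  finally have Tm: "Tm A n k r V = card V * c" by simp
  have inj: "inj_on (Hh A n k) {v\<in>V. succeeds A k (hs n v) 0}"
  proof (rule inj_onI)
    fix v w assume v: "v \<in> {v\<in>V. succeeds A k (hs n v) 0}" and w: "w \<in> {v\<in>V. succeeds A k (hs n v) 0}"
      and eq: "Hh A n k v = Hh A n k w"
    have "v = hs n v 0" by (simp add: hs_def)
    also have "\<dots> = out A 0 (Hh A n k v)" using v by (simp add: succeeds_def Hh_def)
    also have "\<dots> = out A 0 (Hh A n k w)" using eq by simp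
    also have "\<dots> = hs n w 0" using w by (simp add: succeeds_def Hh_def)
    also have "\<dots> = w" by (simp add: hs_def)
    finally show "v = w" .
  qed
  have "Sc A n k V = card (Hh A n k ` {v\<in>V. succeeds A k (hs n v) 0})"
    using 0 inj by (simp add: Sc_card card_image)
  also have "\<dots> \<le> card (Hh A n k ` V)"
    by (intro card_mono finite_imageI image_mono) (use 0 in auto)
  also have "\<dots> \<le> 2 * c + 1"
    using card_parts[OF valid 0(3) 0(2)] rk by (simp add: c_def)
  finally have Sc: "real (Sc A n k V) \<le> 2 * real c + 1" by simp
  have "real (Sc A n k V) * KK 1 (real (card V)) \<le> real (card V) * real c + real (card V)"
    by (rule base_ineq) (use Sc in auto)
  then show ?case using Tm by simp
next
  case (Suc m)
  define c where "c = card (queries A r 0 h)"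
  define Hs where "Hs = Hh A n (Suc r) ` V"
  define P where "P H = {v\<in>V. Hh A n (Suc r) v = H}" for H
  define x where "x = real (card V)"
  have rk: "r < k" using Suc by auto
  have finHs: "finite Hs" using Suc by (simp add: Hs_def)
  have cHs: "card Hs \<le> 2 * c + 1"
    using card_parts[OF valid Suc(4) Suc(3)] by (simp add: c_def Hs_def)
  have finP: "finite (P H)" for H using Suc by (simp add: P_def)
  have IH: "real (Sc A n k (P H)) * KK (Suc m) (real (card (P H))) \<le> real (Tm A n k (Suc r) (P H)) + real (card (P H))" for H
  proof -
    have a: "Suc r + Suc m = k" using Suc(2) by simp
    have b: "\<forall>v\<in>P H. Hh A n (Suc r) v = H" by (simp add: P_def)
    show ?thesis by (rule Suc.IH[OF a finP b])
  qed
  have part: "real (Sc A n k (P H)) * KK (Suc (Suc m)) x \<le> real (Tm A n k (Suc r) (P H)) + max (real (card (P H))) (x / (4 * exp 1))" for H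
  proof -
    have m2: "Suc (Suc m) \<ge> 2" by simp
    have x0: "x \<ge> 0" by (simp add: x_def)
    have Sy: "real (Sc A n k (P H)) \<le> real (card (P H))" using Sc_le[OF finP] by simp
    have IH': "real (Sc A n k (P H)) * KK (Suc (Suc m) - 1) (real (card (P H))) \<le> real (Tm A n k (Suc r) (P H)) + real (card (P H))"
      using IH by simp
    show ?thesis by (rule part_ineq[OF m2 x0 _ _ Sy IH']) simp_all
  qed
  have sumSc: "Sc A n k V = (\<Sum>H\<in>Hs. Sc A n k (P H))"
    unfolding Sc_def Hs_def P_def using Suc(3) by (rule sum.image_gen)
  have sumTm: "Tm A n k (Suc r) V = (\<Sum>H\<in>Hs. Tm A n k (Suc r) (P H))"
    unfolding Tm_def Hs_def P_def using Suc(3) by (rule sum.image_gen)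
  have sumcard: "card V = (\<Sum>H\<in>Hs. card (P H))"
  proof -
    have "card V = (\<Sum>v\<in>V. 1::nat)" by simp
    also have "\<dots> = (\<Sum>H\<in>Hs. \<Sum>v\<in>P H. 1)" unfolding Hs_def P_def by (rule sum.image_gen[OF Suc(3)])
    finally show ?thesis by simp
  qed
  have "real (Sc A n k V) * KK (Suc (Suc m)) x = (\<Sum>H\<in>Hs. real (Sc A n k (P H)) * KK (Suc (Suc m)) x)"
    by (simp add: sumSc sum_distrib_right)
  also have "\<dots> \<le> (\<Sum>H\<in>Hs. real (Tm A n k (Suc r) (P H)) + max (real (card (P H))) (x / (4 * exp 1)))"
    by (rule sum_mono) (rule part)
  also have "\<dots> = real (Tm A n k (Suc r) V) + (\<Sum>H\<in>Hs. max (real (card (P H))) (x / (4 * exp 1)))"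
    by (simp add: sum.distrib sumTm)
  also have "(\<Sum>H\<in>Hs. max (real (card (P H))) (x / (4 * exp 1))) \<le> x * real c + x"
  proof -
    have "(\<Sum>H\<in>Hs. real (card (P H))) = x" unfolding x_def sumcard by simp
    then show ?thesis by (rule combine[OF finHs _ _ cHs]) simp
  qed
  finally have "real (Sc A n k V) * KK (Suc (Suc m)) x \<le> real (Tm A n k (Suc r) V) + (x * real c + x)"
    by simp
  moreover have "Tm A n k r V = card V * c + Tm A n k (Suc r) V"
    using Tm_split[OF rk Suc(4)] by (simp add: c_def)
  ultimately show ?case by (simp add: x_def algebra_simps)
qed



theorem proposition3:
  fixes n k :: nat and p :: real and M :: "alg measure"
  assumes "n > 1" and "1 \<le> k" and "k \<le> nat \<lceil>log 2 (real n)\<rceil>"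
    and "0 \<le> p" and "p \<le> 1"
    and "prob_space M"
    and "\<forall>A\<in>space M. valid_alg A"
    and "\<forall>\<sigma> i. (\<lambda>A. ennreal (real (cost A k \<sigma> i))) \<in> borel_measurable M"
    and "\<forall>\<sigma>\<in>inputs n. \<forall>i<n. {A \<in> space M. succeeds A k \<sigma> i} \<in> sets M
                          \<and> measure M {A \<in> space M. succeeds A k \<sigma> i} \<ge> p"
  shows "\<exists>\<sigma>\<in>inputs n. \<exists>i<n.
           (\<integral>\<^sup>+ A. ennreal (real (cost A k \<sigma> i)) \<partial>M)
             \<ge> ennreal (real k / (4 * exp 1) * p * real n powr (1 / real k) - 1 - p * real k)"
proof -
  note n1 = assms(1) and k1 = assms(2) and p0 = assms(4) and PS = assms(6)
    and valid = assms(7) and meas = assms(8) and succ = assms(9)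
  interpret prob_space M by (rule PS)
  define N where "N = {1..n}"
  define K where "K = KK k (real n)"
  define tgt where "tgt = real k / (4 * exp 1) * p * real n powr (1 / real k) - 1 - p * real k"
  have tgtK: "tgt = p * K - 1" unfolding tgt_def K_def KK_def by (simp add: algebra_simps)
  have hsin: "hs n v \<in> inputs n" if "v \<in> N" for v using that by (intro hs_inputs) (auto simp: N_def)
  have n0: "0 < n" using n1 by simp
  define S where "S v = {A \<in> space M. succeeds A k (hs n v) 0}" for v
  define I where "I v = (\<integral>\<^sup>+ A. ennreal (real (cost A k (hs n v) 0)) \<partial>M)" for v
  have SS: "S v \<in> sets M \<and> measure M (S v) \<ge> p" if "v \<in> N" for v
  proof -
    have "\<forall>i<n. {A \<in> space M. succeeds A k (hs n v) i} \<in> sets M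
                          \<and> measure M {A \<in> space M. succeeds A k (hs n v) i} \<ge> p"
      using succ hsin[OF that] by blast
    then show ?thesis using n0 unfolding S_def by blast
  qed
  have Ssets: "S v \<in> sets M" and Sp: "measure M (S v) \<ge> p" if "v \<in> N" for v
    using SS[OF that] by auto
  show ?thesis
  proof (cases "tgt \<le> 0")
    case True
    have "1 \<in> N" using n1 by (simp add: N_def)
    then show ?thesis using hsin[of 1] n0 True unfolding tgt_def[symmetric]
      by (intro bexI[of _ "hs n 1"] exI[of _ 0]) (auto simp: ennreal_neg)
  next
    case False
    then have K0: "K \<ge> 0" using tgtK p0
      by (smt (verit) mult_nonneg_nonpos)
    have pw: "ennreal (K * (\<Sum>v\<in>N. indicator (S v) A)) \<le> (\<Sum>v\<in>N. ennreal (real (cost A k (hs n v) 0))) + ennreal (real n)"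
      if A: "A \<in> space M" for A
    proof -
      have vA: "valid_alg A" using valid A by blast
      have "real (Sc A n k N) * KK (Suc (k - 1)) (real (card N)) \<le> real (Tm A n k 0 N) + real (card N)"
        by (rule main_claim[OF vA, where r=0 and m="k - 1" and V=N and h=Map.empty]) (use k1 in \<open>auto simp: N_def Hh_def\<close>)
      moreover have "Suc (k - 1) = k" using k1 by simp
      moreover have "card N = n" by (simp add: N_def)
      moreover have "Tm A n k 0 N = (\<Sum>v\<in>N. cost A k (hs n v) 0)"
        unfolding Tm_def cost_def Hh_def by (simp add: atLeast0LessThan)
      moreover have "real (Sc A n k N) = (\<Sum>v\<in>N. indicator (S v) A)"
        unfolding Sc_def S_def using A by (auto simp: indicator_def of_nat_sum intro!: sum.cong)
      ultimately have "K * (\<Sum>v\<in>N. indicator (S v) A) \<le> (\<Sum>v\<in>N. real (cost A k (hs n v) 0)) + real n"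
        by (simp add: K_def algebra_simps)
      then have "ennreal (K * (\<Sum>v\<in>N. indicator (S v) A)) \<le> ennreal ((\<Sum>v\<in>N. real (cost A k (hs n v) 0)) + real n)"
        by (rule ennreal_leI)
      also have "\<dots> = (\<Sum>v\<in>N. ennreal (real (cost A k (hs n v) 0))) + ennreal (real n)"
        by (simp add: ennreal_plus sum_nonneg)
      finally show ?thesis .
    qed
    have int_le: "(\<integral>\<^sup>+ A. ennreal (K * (\<Sum>v\<in>N. indicator (S v) A)) \<partial>M) \<le>
        (\<integral>\<^sup>+ A. (\<Sum>v\<in>N. ennreal (real (cost A k (hs n v) 0))) + ennreal (real n) \<partial>M)"
      by (rule nn_integral_mono) (rule pw)
    have lhs: "(\<integral>\<^sup>+ A. ennreal (K * (\<Sum>v\<in>N. indicator (S v) A)) \<partial>M) = ennreal K * (\<Sum>v\<in>N. emeasure M (S v))"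
    proof -
      have "(\<integral>\<^sup>+ A. ennreal (K * (\<Sum>v\<in>N. indicator (S v) A)) \<partial>M) = (\<integral>\<^sup>+ A. ennreal K * (\<Sum>v\<in>N. indicator (S v) A) \<partial>M)"
        using K0 by (intro nn_integral_cong) (simp add: ennreal_mult sum_nonneg ennreal_indicator flip: sum_ennreal)
      also have "\<dots> = ennreal K * (\<integral>\<^sup>+ A. (\<Sum>v\<in>N. indicator (S v) A) \<partial>M)"
        by (rule nn_integral_cmult) (use Ssets in \<open>auto intro!: borel_measurable_sum\<close>)
      also have "(\<integral>\<^sup>+ A. (\<Sum>v\<in>N. indicator (S v) A) \<partial>M) = (\<Sum>v\<in>N. emeasure M (S v))"
        using Ssets by (simp add: nn_integral_sum)
      finally show ?thesis .
    qed
    have rhs: "(\<integral>\<^sup>+ A. (\<Sum>v\<in>N. ennreal (real (cost A k (hs n v) 0))) + ennreal (real n) \<partial>M) = (\<Sum>v\<in>N. I v) + ennreal (real n)"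
    proof -
      have "(\<integral>\<^sup>+ A. (\<Sum>v\<in>N. ennreal (real (cost A k (hs n v) 0))) + ennreal (real n) \<partial>M)
          = (\<integral>\<^sup>+ A. (\<Sum>v\<in>N. ennreal (real (cost A k (hs n v) 0))) \<partial>M) + (\<integral>\<^sup>+ A. ennreal (real n) \<partial>M)"
      proof (rule nn_integral_add)
        show "(\<lambda>A. \<Sum>v\<in>N. ennreal (real (cost A k (hs n v) 0))) \<in> borel_measurable M"
          by (rule borel_measurable_sum) (use meas in blast)
      qed simp
      also have "(\<integral>\<^sup>+ A. (\<Sum>v\<in>N. ennreal (real (cost A k (hs n v) 0))) \<partial>M) = (\<Sum>v\<in>N. I v)"
        unfolding I_def by (rule nn_integral_sum) (use meas in blast)
      also have "(\<integral>\<^sup>+ A. ennreal (real n) \<partial>M) = ennreal (real n)"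
        by (simp add: emeasure_space_1)
      finally show ?thesis .
    qed
    have msum: "of_nat n * ennreal p \<le> (\<Sum>v\<in>N. emeasure M (S v))"
    proof -
      have "(\<Sum>v\<in>N. ennreal p) \<le> (\<Sum>v\<in>N. emeasure M (S v))"
        by (rule sum_mono) (use Sp in \<open>auto simp: emeasure_eq_measure intro!: ennreal_leI\<close>)
      then show ?thesis by (simp add: N_def)
    qed
    have Nne: "N \<noteq> {}" "finite N" using n1 by (auto simp: N_def)
    obtain vs where vs: "vs \<in> N" "\<And>v. v \<in> N \<Longrightarrow> I v \<le> I vs"
      using Max_in[of "I ` N"] Max_ge[of "I ` N"] Nne by fastforce
    have "(\<Sum>v\<in>N. I v) \<le> (\<Sum>v\<in>N. I vs)" by (rule sum_mono) (rule vs(2))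
    also have "\<dots> = of_nat n * I vs" by (simp add: N_def)
    finally have sI: "(\<Sum>v\<in>N. I v) \<le> of_nat n * I vs" .
    have main: "ennreal K * (of_nat n * ennreal p) \<le> of_nat n * I vs + ennreal (real n)"
    proof -
      have "ennreal K * (of_nat n * ennreal p) \<le> ennreal K * (\<Sum>v\<in>N. emeasure M (S v))"
        by (rule mult_left_mono[OF msum]) simp
      also have "\<dots> \<le> (\<Sum>v\<in>N. I v) + ennreal (real n)" using int_le lhs rhs by simp
      also have "\<dots> \<le> of_nat n * I vs + ennreal (real n)" using sI by (rule add_right_mono)
      finally show ?thesis .
    qed
    have "ennreal tgt \<le> I vs"
    proof (cases "I vs = \<top>")
      case True then show ?thesis by simp
    next
      case False
      then obtain r where r: "I vs = ennreal r" "r \<ge> 0" by (cases "I vs") auto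
      have "ennreal (K * (real n * p)) \<le> ennreal (real n * r + real n)"
        using main r K0 p0 by (simp add: ennreal_mult ennreal_plus ennreal_of_nat_eq_real_of_nat)
      moreover have "ennreal (real n * r + real n) = ennreal (real n * r) + ennreal (real n)"
        using r by (intro ennreal_plus) auto
      ultimately have "ennreal (K * (real n * p)) \<le> ennreal (real n * r + real n)" by simp
      then have "K * (real n * p) \<le> real n * r + real n"
        using r n0 by (subst (asm) ennreal_le_iff) auto
      then have "real n * (p * K - 1) \<le> real n * r" by (simp add: algebra_simps)
      then have "p * K - 1 \<le> r" using n0 by simp
      then show ?thesis using r tgtK by (simp add: ennreal_leI)
    qed
    then show ?thesis using hsin[OF vs(1)] n0 unfolding tgt_def I_def
      by (intro bexI[of _ "hs n vs"] exI[of _ 0]) auto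
  qed
qed

end
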